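(* Let $K$ be a field of characteristic $p>0$ such that $K/K^{p^\infty}$ is a finitely generated field extension, where $K^{p^\infty}=\bigcap_{n\ge0}K^{p^n}$. Let $W_1$ be a subfield with $K^p\subseteq W_1\subsetneq K$. Then there exists a subfield $W_2\subseteq W_1$ such that $K,W_1,W_2$ is a $2$-foliation on $K$, i.e. $K^{p^2}\subseteq W_2$, $W_2\cdot K^p=W_1$, and $\dim_{W_2}(W_1)=\dim_{W_1}(K)$.
   Context: $\cdot$ denotes the compositum of subfields inside $K$. *)

theory Defs
  imports "HOL-Algebra.Algebra"
begin

definition ring_char :: "('a, 'b) ring_scheme \<Rightarrow> nat" where
  "ring_char R = (if \<exists>n::nat. n > 0 \<and> add_pow R n \<one>\<^bsub>R\<^esub> = \<zero>\<^bsub>R\<^esub>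
                  then (LEAST n::nat. n > 0 \<and> add_pow R n \<one>\<^bsub>R\<^esub> = \<zero>\<^bsub>R\<^esub>) else 0)"

definition frob_image :: "('a, 'b) ring_scheme \<Rightarrow> nat \<Rightarrow> 'a set" where
  "frob_image R q = (\<lambda>x. x [^]\<^bsub>R\<^esub> q) ` carrier R"

definition perfect_core :: "('a, 'b) ring_scheme \<Rightarrow> nat \<Rightarrow> 'a set" where
  "perfect_core R p = (\<Inter>n. frob_image R (p ^ n))"

definition compositum :: "('a, 'b) ring_scheme \<Rightarrow> 'a set \<Rightarrow> 'a set \<Rightarrow> 'a set" where
  "compositum R A B = generate_field R (A \<union> B)"

definition fin_gen_ext :: "('a, 'b) ring_scheme \<Rightarrow> 'a set \<Rightarrow> bool" where
  "fin_gen_ext R F \<longleftrightarrow> (\<exists>S. finite S \<and> S \<subseteq> carrier R \<and> generate_field R (F \<union> S) = carrier R)"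

end

theory Submission
  imports Defs "HOL-Computational_Algebra.Primes"
begin


lemma (in cring) binomial_expand:
  assumes a: "a \<in> carrier R" and b: "b \<in> carrier R"
  shows "(a \<oplus> b) [^] n = (\<Oplus>k\<in>{..n}. add_pow R (n choose k) (a [^] k \<otimes> b [^] (n - k)))"
proof (induction n)
  case 0
  then show ?case using a b by simp
next
  case (Suc n)
  define T1 where "T1 = (\<lambda>k. add_pow R (n choose k) (a [^] Suc k \<otimes> b [^] (n - k)))"
  define g where "g = (\<lambda>k. add_pow R (n choose k) (a [^] k \<otimes> b [^] (Suc n - k)))"
  have T1c: "T1 \<in> UNIV \<rightarrow> carrier R" unfolding T1_def using a b by auto
  have gc: "g \<in> UNIV \<rightarrow> carrier R" unfolding g_def using a b by auto
  have "(a \<oplus> b) [^] Suc n = (a \<oplus> b) [^] n \<otimes> a \<oplus> (a \<oplus> b) [^] n \<otimes> b"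
    using a b by (simp add: r_distr)
  also have "(a \<oplus> b) [^] n \<otimes> a = (\<Oplus>k\<in>{..n}. T1 k)"
    unfolding Suc T1_def using a b
    by (subst finsum_ldistr) (auto intro!: finsum_cong simp: add_pow_ldistr add_pow_rdistr m_ac)
  also have "(a \<oplus> b) [^] n \<otimes> b = (\<Oplus>k\<in>{..n}. g k)"
  proof -
    have "(a \<oplus> b) [^] n \<otimes> b = (\<Oplus>k\<in>{..n}. add_pow R (n choose k) (a [^] k \<otimes> b [^] (n - k)) \<otimes> b)"
      unfolding Suc using a b by (subst finsum_ldistr) auto
    also have "\<dots> = (\<Oplus>k\<in>{..n}. g k)"
    proof (rule finsum_cong')
      fix k assume "k \<in> {..n}" 
      hence "Suc n - k = Suc (n - k)" by auto
      thus "add_pow R (n choose k) (a [^] k \<otimes> b [^] (n - k)) \<otimes> b = g k"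
        unfolding g_def using a b by (simp add: add_pow_ldistr add_pow_rdistr m_ac)
    qed (use gc in auto)
    finally show ?thesis .
  qed
  also have "(\<Oplus>k\<in>{..n}. g k) = (\<Oplus>k\<in>{..Suc n}. g k)"
  proof -
    have "g (Suc n) = \<zero>" unfolding g_def by (simp add: binomial_eq_0 del: nat_pow_Suc)
    moreover have "finsum R g {..n} \<in> carrier R" by (rule finsum_closed) (use gc in auto)
    ultimately show ?thesis using gc by (subst finsum_Suc) auto
  qed
  also have "\<dots> = (\<Oplus>i\<in>{..n}. g (Suc i)) \<oplus> g 0"
    using gc by (subst finsum_Suc2) auto
  finally have eq: "(a \<oplus> b) [^] Suc n = (\<Oplus>k\<in>{..n}. T1 k) \<oplus> ((\<Oplus>i\<in>{..n}. g (Suc i)) \<oplus> g 0)" .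
  have "(\<Oplus>k\<in>{..Suc n}. add_pow R (Suc n choose k) (a [^] k \<otimes> b [^] (Suc n - k)))
      = (\<Oplus>i\<in>{..n}. add_pow R (Suc n choose Suc i) (a [^] Suc i \<otimes> b [^] (Suc n - Suc i))) \<oplus> g 0"
    using a b by (subst finsum_Suc2) (auto simp: g_def)
  also have "(\<Oplus>i\<in>{..n}. add_pow R (Suc n choose Suc i) (a [^] Suc i \<otimes> b [^] (Suc n - Suc i)))
      = (\<Oplus>i\<in>{..n}. T1 i \<oplus> g (Suc i))"
  proof (rule finsum_cong')
    fix i assume "i \<in> {..n}"
    show "add_pow R (Suc n choose Suc i) (a [^] Suc i \<otimes> b [^] (Suc n - Suc i)) = T1 i \<oplus> g (Suc i)"
      unfolding T1_def g_def using a b by (simp add: add.nat_pow_mult)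
  qed (use T1c gc in auto)
  also have "\<dots> = (\<Oplus>i\<in>{..n}. T1 i) \<oplus> (\<Oplus>i\<in>{..n}. g (Suc i))"
    using T1c gc by (subst finsum_addf) auto
  finally have eq2: "(\<Oplus>k\<in>{..Suc n}. add_pow R (Suc n choose k) (a [^] k \<otimes> b [^] (Suc n - k))) = 
     (\<Oplus>i\<in>{..n}. T1 i) \<oplus> (\<Oplus>i\<in>{..n}. g (Suc i)) \<oplus> g 0" .
  have c1: "(\<Oplus>i\<in>{..n}. T1 i) \<in> carrier R" by (rule finsum_closed) (use T1c in auto)
  have c2: "(\<Oplus>i\<in>{..n}. g (Suc i)) \<in> carrier R" by (rule finsum_closed) (use gc in auto)
  have c3: "g 0 \<in> carrier R" using gc by auto
  show ?case unfolding eq eq2 using c1 c2 c3 by (simp add: a_assoc)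
qed

lemma (in ring) char_add_pow_zero:
  assumes char: "add_pow R (p::nat) \<one> = \<zero>" and x: "x \<in> carrier R"
  shows "add_pow R (p * m) x = \<zero>"
proof -
  have "add_pow R p x = \<zero>"
    using add_pow_ldistr[of \<one> x p] x char by simp
  hence "add_pow R m (add_pow R p x) = \<zero>" by simp
  thus ?thesis using add.nat_pow_pow[OF x] by simp
qed

lemma (in cring) freshman:
  assumes p: "Factorial_Ring.prime (p::nat)" and char: "add_pow R p \<one> = \<zero>"
    and a: "a \<in> carrier R" and b: "b \<in> carrier R"
  shows "(a \<oplus> b) [^] p = a [^] p \<oplus> b [^] p"
proof -
  define h where "h = (\<lambda>k. if k = 0 then b [^] p else if k = p then a [^] p else \<zero>)"
  have hc: "h \<in> UNIV \<rightarrow> carrier R" unfolding h_def using a b by auto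
  have p2: "p \<ge> 2" using p prime_ge_2_nat by blast
  have "(a \<oplus> b) [^] p = (\<Oplus>k\<in>{..p}. add_pow R (p choose k) (a [^] k \<otimes> b [^] (p - k)))"
    by (rule binomial_expand[OF a b])
  also have "\<dots> = (\<Oplus>k\<in>{..p}. h k)"
  proof (rule finsum_cong')
    fix k assume k: "k \<in> {..p}"
    show "add_pow R (p choose k) (a [^] k \<otimes> b [^] (p - k)) = h k"
    proof (cases "k = 0 \<or> k = p")
      case True thus ?thesis unfolding h_def using p2 a b by auto
    next
      case False
      hence "p dvd (p choose k)" using dvd_choose_prime[of k p] k p by auto
      then obtain m where "p choose k = p * m" by blast
      thus ?thesis unfolding h_def using False char_add_pow_zero[OF char, of _ m] a b by auto
    qed
  qed (use hc in auto)
  also have "\<dots> = a [^] p \<oplus> b [^] p"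
  proof -
    obtain q where q: "p = Suc (Suc q)" using p2 by (metis add_2_eq_Suc le_Suc_ex)
    have "(\<Oplus>k\<in>{..Suc q}. h k) = (\<Oplus>i\<in>{..q}. h (Suc i)) \<oplus> h 0"
      using hc by (subst finsum_Suc2) auto
    also have "(\<Oplus>i\<in>{..q}. h (Suc i)) = (\<Oplus>i\<in>{..q}. \<zero>)"
      by (rule finsum_cong') (auto simp: h_def q)
    finally have "(\<Oplus>k\<in>{..Suc q}. h k) = b [^] p" using b by (simp add: h_def)
    moreover have "h (Suc (Suc q)) = a [^] p" unfolding h_def q by simp
    moreover have "(\<Oplus>k\<in>{..Suc (Suc q)}. h k) = h (Suc (Suc q)) \<oplus> (\<Oplus>k\<in>{..Suc q}. h k)"
      using hc by (intro finsum_Suc) auto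
    ultimately show ?thesis unfolding q by simp
  qed
  finally show ?thesis .
qed

lemma (in ring) add_pow_one_mult:
  "add_pow R ((m::nat) * k) \<one> = add_pow R m \<one> \<otimes> add_pow R k \<one>"
proof -
  have "add_pow R m \<one> \<otimes> add_pow R k \<one> = add_pow R m (\<one> \<otimes> add_pow R k \<one>)"
    using add_pow_ldistr[of \<one> "add_pow R k \<one>" m] by simp
  also have "\<dots> = add_pow R m (add_pow R k \<one>)" by simp
  also have "\<dots> = add_pow R (k * m) \<one>" using add.nat_pow_pow[of \<one> k m] add.nat_pow_pow[of \<one> m k] by (simp add: add_pow_def mult.commute)
  finally show ?thesis by (simp add: mult.commute)
qed

lemma char_facts:
  fixes R :: "('a, 'b) ring_scheme" (structure)
  assumes F: "field R" and c: "ring_char R = p" and p0: "p > 0"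
  shows "add_pow R p \<one>\<^bsub>R\<^esub> = \<zero>\<^bsub>R\<^esub>" and "Factorial_Ring.prime p"
proof -
  interpret field R by (rule F)
  let ?P = "\<lambda>n::nat. n > 0 \<and> add_pow R n \<one> = \<zero>"
  have ex: "\<exists>n. ?P n"
  proof (rule ccontr)
    assume na: "\<not> (\<exists>n. ?P n)" have "ring_char R = 0" unfolding ring_char_def using na by (simp only: if_False) 
    with c p0 show False by simp
  qed
  hence pl: "p = (LEAST n. ?P n)" using c unfolding ring_char_def by simp
  have Pp: "?P p" using LeastI_ex[OF ex] pl by simp
  thus "add_pow R p \<one> = \<zero>" by simp
  have minl: "\<And>m. m < p \<Longrightarrow> \<not> ?P m" using not_less_Least pl by blast
  have p1: "p \<noteq> 1" using Pp by auto
  show "Factorial_Ring.prime p"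
    unfolding prime_nat_iff
  proof (intro conjI allI impI)
    show "1 < p" using p1 p0 by simp
    fix m assume "m dvd p"
    then obtain k where k: "p = m * k" by blast
    show "m = 1 \<or> m = p"
    proof (rule ccontr)
      assume "\<not> (m = 1 \<or> m = p)"
      hence m: "m \<noteq> 1" "m \<noteq> p" by auto
      have m0: "m > 0" and k0: "k > 0" using k p0 by (auto intro: Nat.gr0I)
      have m2: "m \<ge> 2" using m m0 by simp
      have k1: "k \<noteq> 1" using k m by auto
      have k2: "k \<ge> 2" using k1 k0 by simp
      have "2 * k \<le> m * k" using m2 by simp
      hence kp: "k < p" using k k0 by simp
      have "m * 2 \<le> m * k" using k2 by simp
      hence mp: "m < p" using k m0 by simp
      have "add_pow R m \<one> \<otimes> add_pow R k \<one> = \<zero>" using Pp k add_pow_one_mult by simp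
      hence "add_pow R m \<one> = \<zero> \<or> add_pow R k \<one> = \<zero>" using integral by auto
      thus False using minl[OF mp] minl[OF kp] m0 k0 by auto
    qed
  qed
qed



lemma ring_hom_add_pow:
  assumes "ring R" "ring S" "h \<in> ring_hom R S" "a \<in> carrier R"
  shows "h (add_pow R (n::nat) a) = add_pow S n (h a)"
proof -
  interpret ring_hom_ring R S h using assms by (intro ring_hom_ringI2) auto
  show ?thesis
  proof (induction n)
    case 0 thus ?case by simp
  next
    case (Suc n)
    have "add_pow R (Suc n) a = add_pow R n a \<oplus>\<^bsub>R\<^esub> a" by (simp add: add_pow_def)
    moreover have "add_pow S (Suc n) (h a) = add_pow S n (h a) \<oplus>\<^bsub>S\<^esub> h a" by (simp add: add_pow_def)
    ultimately show ?case using Suc assms(4) by simp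
  qed
qed

locale charp = field R for R (structure) +
  fixes p :: nat
  assumes prime_p: "Factorial_Ring.prime p" and char_p: "add_pow R p \<one> = \<zero>"
begin

lemma p_ge2: "p \<ge> 2" using prime_p prime_ge_2_nat by blast

lemma frob_add: "x \<in> carrier R \<Longrightarrow> y \<in> carrier R \<Longrightarrow> (x \<oplus> y) [^] p = x [^] p \<oplus> y [^] p"
  using freshman[OF prime_p char_p] by blast

lemma frob_neg: "x \<in> carrier R \<Longrightarrow> (\<ominus> x) [^] p = \<ominus> (x [^] p)"
proof -
  assume x: "x \<in> carrier R"
  have "x [^] p \<oplus> (\<ominus> x) [^] p = (x \<oplus> \<ominus> x) [^] p" using frob_add[OF x] x by simp
  also have "\<dots> = \<zero>" using x p_ge2 by (simp add: r_neg nat_pow_zero)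
  finally have "x [^] p \<oplus> (\<ominus> x) [^] p = \<zero>" .
  hence "(\<ominus> x) [^] p \<oplus> x [^] p = \<zero>" using x by (simp add: a_comm)
  thus ?thesis using x by (intro sym[OF minus_equality]) auto
qed

lemma frob_hom: "(\<lambda>x. x [^] p) \<in> ring_hom R R"
proof (rule ring_hom_memI)
  fix x y assume x: "x \<in> carrier R" and y: "y \<in> carrier R"
  show "x [^] p \<in> carrier R" using x by simp
  show "(x \<otimes> y) [^] p = x [^] p \<otimes> y [^] p" using x y by (rule nat_pow_distrib)
  show "(x \<oplus> y) [^] p = x [^] p \<oplus> y [^] p" using x y by (rule frob_add)
qed simp

lemma frob_hom_ring: "ring_hom_ring R R (\<lambda>x. x [^] p)"
  using frob_hom by (intro ring_hom_ringI2) (auto simp: ring_axioms)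

lemma frob_img_subfield:
  assumes "subfield K R" shows "subfield ((\<lambda>x. x [^] p) ` K) R" and "inj_on (\<lambda>x. x [^] p) K"
  using ring_hom_ring.img_is_subfield[OF frob_hom_ring assms] by auto

lemma frob_image_subfield: "subfield (frob_image R p) R"
  unfolding frob_image_def using frob_img_subfield(1)[OF carrier_is_subfield] .

end



lemma (in domain) pow_nz: "a \<in> carrier R \<Longrightarrow> a \<noteq> \<zero> \<Longrightarrow> a [^] (n::nat) \<noteq> \<zero>"
  by (induction n) (auto simp: integral_iff)

context charp
begin

abbreviation UP where "UP \<equiv> poly_ring R"

lemma UP_cring: "cring UP" using univ_poly_is_cring[OF carrier_is_subring] .
lemma UP_domain: "domain UP" using univ_poly_is_domain[OF carrier_is_subring] .

lemma poc_hom: "poly_of_const \<in> ring_hom R UP"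
  using canonical_embedding_is_hom[OF carrier_is_subring] by simp

lemma poc_hom_ring: "ring_hom_ring R UP poly_of_const"
  using poc_hom UP_cring by (intro ring_hom_ringI2) (auto simp: ring_axioms cring.axioms(1))

lemma UP_char: "add_pow UP p \<one>\<^bsub>UP\<^esub> = \<zero>\<^bsub>UP\<^esub>"
proof -
  have "poly_of_const (add_pow R p \<one>) = add_pow UP p (poly_of_const \<one>)"
    using ring_hom_add_pow[OF ring_axioms cring.axioms(1)[OF UP_cring] poc_hom] by simp
  moreover have "poly_of_const \<one> = \<one>\<^bsub>UP\<^esub>" by (simp add: poly_of_const_def univ_poly_one)
  moreover have "poly_of_const \<zero> = \<zero>\<^bsub>UP\<^esub>" by (simp add: poly_of_const_def univ_poly_zero)
  ultimately show ?thesis using char_p by simp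
qed

lemma UP_freshman:
  "a \<in> carrier UP \<Longrightarrow> b \<in> carrier UP \<Longrightarrow> (a \<oplus>\<^bsub>UP\<^esub> b) [^]\<^bsub>UP\<^esub> p = a [^]\<^bsub>UP\<^esub> p \<oplus>\<^bsub>UP\<^esub> b [^]\<^bsub>UP\<^esub> p"
  using cring.freshman[OF UP_cring prime_p UP_char] by blast

lemma const_pow:
  assumes "a \<in> carrier R" "a \<noteq> \<zero>" shows "[a] [^]\<^bsub>UP\<^esub> (n::nat) = [a [^] n]"
proof -
  have "poly_of_const (a [^] n) = (poly_of_const a) [^]\<^bsub>UP\<^esub> n"
    using ring_hom_ring.hom_nat_pow[OF poc_hom_ring] assms by simp
  moreover have "a [^] n \<noteq> \<zero>" using assms by (simp add: pow_nz)
  ultimately show ?thesis using assms by (simp add: poly_of_const_def)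
qed

lemma pow_divisor:
  assumes q: "q \<in> carrier UP" "pirreducible (carrier R) q"
  shows "g \<in> carrier UP \<Longrightarrow> g pdivides (q [^]\<^bsub>UP\<^esub> (n::nat)) \<Longrightarrow>
         \<exists>k\<le>n. \<exists>u\<in>Units UP. g = q [^]\<^bsub>UP\<^esub> k \<otimes>\<^bsub>UP\<^esub> u"
proof (induction n arbitrary: g)
  interpret UP: domain UP by (rule UP_domain)
  case 0
  then obtain b where b: "b \<in> carrier UP" "\<one>\<^bsub>UP\<^esub> = g \<otimes>\<^bsub>UP\<^esub> b"
    unfolding pdivides_def by (auto elim: dividesE)
  hence "g \<in> Units UP" using 0 UP.m_comm[of g b] unfolding Units_def by auto
  moreover have "g = q [^]\<^bsub>UP\<^esub> (0::nat) \<otimes>\<^bsub>UP\<^esub> g" using 0 by simp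
  ultimately show ?case by blast
next
  interpret UP: domain UP by (rule UP_domain)
  case (Suc n)
  have qnz: "q \<noteq> \<zero>\<^bsub>UP\<^esub>" using q(2) pirreducibleE(1)[OF carrier_is_subring q(1)] univ_poly_zero by metis
  obtain b where b: "b \<in> carrier UP" "q [^]\<^bsub>UP\<^esub> Suc n = g \<otimes>\<^bsub>UP\<^esub> b"
    using Suc(3) unfolding pdivides_def by (auto elim: dividesE)
  show ?case
  proof (cases "q pdivides g")
    case True
    then obtain g' where g': "g' \<in> carrier UP" "g = q \<otimes>\<^bsub>UP\<^esub> g'"
      unfolding pdivides_def by (auto elim: dividesE)
    have "q \<otimes>\<^bsub>UP\<^esub> q [^]\<^bsub>UP\<^esub> n = q \<otimes>\<^bsub>UP\<^esub> (g' \<otimes>\<^bsub>UP\<^esub> b)"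
      using b g' q(1) UP.m_comm[of q "q [^]\<^bsub>UP\<^esub> n"] by (simp add: UP.m_assoc)
    hence "q [^]\<^bsub>UP\<^esub> n = g' \<otimes>\<^bsub>UP\<^esub> b"
      using UP.m_lcancel[OF qnz q(1)] b g' q(1) by simp
    hence "g' pdivides q [^]\<^bsub>UP\<^esub> n" unfolding pdivides_def using b g' by (auto intro: dividesI)
    then obtain k u where ku: "k \<le> n" "u \<in> Units UP" "g' = q [^]\<^bsub>UP\<^esub> k \<otimes>\<^bsub>UP\<^esub> u"
      using Suc.IH g'(1) by blast
    have "g = q [^]\<^bsub>UP\<^esub> Suc k \<otimes>\<^bsub>UP\<^esub> u"
      using g' ku q(1) UP.m_comm[of q "q [^]\<^bsub>UP\<^esub> k"] UP.Units_closed[OF ku(2)] by (simp add: UP.m_ac)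
    thus ?thesis using ku by (intro exI[of _ "Suc k"]) auto
  next
    case False
    have "q [^]\<^bsub>UP\<^esub> Suc n pdivides g \<otimes>\<^bsub>UP\<^esub> b"
      unfolding pdivides_def b(2)[symmetric] using q(1) by (intro UP.divides_refl) simp
    hence "q [^]\<^bsub>UP\<^esub> Suc n pdivides b"
      using pirreducible_pow_pdivides_iff[OF carrier_is_subfield q(1) Suc(2) b(1) q(2) False, of "Suc n"] by blast
    then obtain c where c: "c \<in> carrier UP" "b = q [^]\<^bsub>UP\<^esub> Suc n \<otimes>\<^bsub>UP\<^esub> c"
      unfolding pdivides_def by (auto elim: dividesE)
    have qn: "q [^]\<^bsub>UP\<^esub> Suc n \<in> carrier UP" "q [^]\<^bsub>UP\<^esub> Suc n \<noteq> \<zero>\<^bsub>UP\<^esub>"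
      using q(1) qnz UP.pow_nz[of q "Suc n"] by auto
    have "q [^]\<^bsub>UP\<^esub> Suc n \<otimes>\<^bsub>UP\<^esub> \<one>\<^bsub>UP\<^esub> = q [^]\<^bsub>UP\<^esub> Suc n \<otimes>\<^bsub>UP\<^esub> (g \<otimes>\<^bsub>UP\<^esub> c)"
      using b c qn Suc(2) by (simp add: UP.m_ac)
    hence "\<one>\<^bsub>UP\<^esub> = g \<otimes>\<^bsub>UP\<^esub> c"
      using UP.m_lcancel[OF qn(2) qn(1)] c Suc(2) by simp
    hence "g \<in> Units UP" using c Suc(2) UP.m_comm[of g c] unfolding Units_def by auto
    moreover have "g = q [^]\<^bsub>UP\<^esub> (0::nat) \<otimes>\<^bsub>UP\<^esub> g" using Suc(2) by simp
    ultimately show ?thesis by blast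
  qed
qed

end


context charp
begin

lemma subfield_pow_closed:
  assumes F: "subfield F R" and "y \<in> F" shows "y [^] (n::nat) \<in> F"
proof -
  have Fs: "subring F R" using subfieldE(1)[OF F] .
  show ?thesis using assms(2) by (induction n) (auto intro: subringE(3,6)[OF Fs])
qed

lemma subfield_div_closed:
  assumes F: "subfield F R" and a: "a \<in> F" "a \<noteq> \<zero>" and b: "b \<in> F"
  shows "inv a \<otimes> b \<in> F"
  using subfield_m_inv(1)[OF F, of a] a b subringE(6)[OF subfieldE(1)[OF F]] by auto

lemma coprime_pow_in:
  assumes F: "subfield F R" and x: "x \<in> carrier R" and k: "x [^] k \<in> F" "k > (0::nat)"
    and m: "x [^] (m::nat) \<in> F" and cop: "coprime k m"
  shows "x \<in> F"
proof (cases "x = \<zero>")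
  case True thus ?thesis using subringE(2)[OF subfieldE(1)[OF F]] by simp
next
  case False
  obtain a b where ab: "k * a = m * b + gcd k m" using bezout_nat[of k m] k(2) by auto
  hence ab1: "k * a = m * b + 1" using cop by simp
  have "x [^] (k * a) = x [^] (m * b) \<otimes> x" using ab1 x by (simp add: nat_pow_mult[symmetric])
  hence e: "(x [^] m) [^] b \<otimes> x = (x [^] k) [^] a" using x by (simp add: nat_pow_pow)
  have mb: "(x [^] m) [^] b \<in> F" "(x [^] m) [^] b \<noteq> \<zero>"
    using subfield_pow_closed[OF F m] pow_nz x False by (auto simp: nat_pow_pow)
  define y where "y = (x [^] m) [^] b"
  have yc: "y \<in> carrier R" unfolding y_def using x by simp
  have yu: "y \<in> Units R" using yc mb(2) field_Units unfolding y_def by auto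
  have "inv y \<otimes> (y \<otimes> x) = (inv y \<otimes> y) \<otimes> x"
    using yc x yu by (intro m_assoc[symmetric]) auto
  also have "\<dots> = x" using Units_l_inv[OF yu] x by simp
  finally have eq: "x = inv ((x [^] m) [^] b) \<otimes> (x [^] k) [^] a" using e unfolding y_def by simp
  show ?thesis
    by (subst eq) (rule subfield_div_closed[OF F mb(1,2) subfield_pow_closed[OF F k(1), of a]])
qed

lemma Irr_deg:
  assumes F: "subfield F R" and x: "x \<in> carrier R" and xp: "x [^] p \<in> F" and xn: "x \<notin> F"
  shows "(algebraic over F) x" and "degree (Irr F x) = p"
proof -
  interpret UP: principal_domain UP using univ_poly_is_principal[OF carrier_is_subfield] .
  have Fs: "subring F R" using subfieldE(1)[OF F] .
  have FR: "F \<subseteq> carrier R" using subringE(1)[OF Fs] .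
  have x0: "x \<noteq> \<zero>" using xn subringE(2)[OF Fs] by auto
  define c where "c = x [^] p"
  have c0: "c \<noteq> \<zero>" unfolding c_def using pow_nz x x0 by simp
  have cF: "c \<in> F" unfolding c_def using xp .
  have cc: "c \<in> carrier R" using cF FR by auto
  have mcF: "\<ominus> c \<in> F" using cF subringE(5)[OF Fs] by simp
  have mc0: "\<ominus> c \<noteq> \<zero>" using c0 cc by (metis a_inv_closed l_neg r_zero add.inv_eq_1_iff)
  have mx0: "\<ominus> x \<noteq> \<zero>" using x0 x by (metis add.inv_eq_1_iff)
  define f where "f = X [^]\<^bsub>UP\<^esub> p \<oplus>\<^bsub>UP\<^esub> [\<ominus> c]"
  define q where "q = X \<oplus>\<^bsub>UP\<^esub> [\<ominus> x]"
  have Xc: "X \<in> carrier UP" using var_closed(1)[OF carrier_is_subring] .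
  have mxc: "[\<ominus> x] \<in> carrier UP" 
    unfolding sym[OF univ_poly_carrier] polynomial_def using x mx0 by auto
  have mcc: "[\<ominus> c] \<in> carrier UP" 
    unfolding sym[OF univ_poly_carrier] polynomial_def using cc mc0 by auto
  have Xpc: "X [^]\<^bsub>UP\<^esub> p \<in> carrier UP" using Xc by simp
  have qc: "q \<in> carrier UP" unfolding q_def using Xc mxc by simp
  have qf: "q [^]\<^bsub>UP\<^esub> p = f"
  proof -
    have "q [^]\<^bsub>UP\<^esub> p = X [^]\<^bsub>UP\<^esub> p \<oplus>\<^bsub>UP\<^esub> [\<ominus> x] [^]\<^bsub>UP\<^esub> p"
      unfolding q_def using UP_freshman[OF Xc mxc] .
    also have "[\<ominus> x] [^]\<^bsub>UP\<^esub> p = [\<ominus> c]"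
      using const_pow[of "\<ominus> x" p] x mx0 frob_neg[OF x] unfolding c_def by simp
    finally show ?thesis unfolding f_def .
  qed
  have XF: "X [^]\<^bsub>UP\<^esub> p = X [^]\<^bsub>F[X]\<^esub> p"
    using unitary_monom_eq_var_pow[OF carrier_is_subring] unitary_monom_eq_var_pow[OF Fs] by metis
  have fF: "f \<in> carrier (F[X])"
  proof -
    interpret FX: ring "F[X]" using univ_poly_is_ring[OF Fs] .
    have "[\<ominus> c] \<in> carrier (F[X])"
      unfolding sym[OF univ_poly_carrier] polynomial_def using mcF mc0 by auto
    moreover have "X [^]\<^bsub>F[X]\<^esub> p \<in> carrier (F[X])" using var_pow_closed[OF Fs] .
    moreover have "f = X [^]\<^bsub>F[X]\<^esub> p \<oplus>\<^bsub>F[X]\<^esub> [\<ominus> c]"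
      unfolding f_def XF by (simp add: univ_poly_add)
    ultimately show ?thesis by simp
  qed
  interpret ev: ring_hom_ring UP R "\<lambda>g. eval g x" using eval_ring_hom[OF carrier_is_subring x] .
  have evf: "eval f x = \<zero>"
  proof -
    have "eval f x = eval (X [^]\<^bsub>UP\<^esub> p) x \<oplus> eval [\<ominus> c] x"
      unfolding f_def using ev.hom_add[OF Xpc mcc] by simp
    also have "eval (X [^]\<^bsub>UP\<^esub> p) x = x [^] p" using ev.hom_nat_pow[OF Xc] eval_var[OF x] by simp
    finally show ?thesis using cc unfolding c_def by (simp add: r_neg)
  qed
  have f0: "f \<noteq> []"
  proof
    assume "f = []"
    interpret ev0: ring_hom_ring UP R "\<lambda>g. eval g \<zero>" using eval_ring_hom[OF carrier_is_subring zero_closed] .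
    have "eval f \<zero> = eval (X [^]\<^bsub>UP\<^esub> p) \<zero> \<oplus> eval [\<ominus> c] \<zero>"
      unfolding f_def using ev0.hom_add[OF Xpc mcc] by simp
    also have "eval (X [^]\<^bsub>UP\<^esub> p) \<zero> = \<zero> [^] p" using ev0.hom_nat_pow[OF Xc] eval_var[OF zero_closed] by simp
    finally have "eval f \<zero> = \<ominus> c" using cc p_ge2 by (simp add: nat_pow_zero)
    with \<open>f = []\<close> mc0 show False by simp
  qed
  show alg: "(algebraic over F) x" using algebraicI[OF fF f0 evf] .
  define g where "g = Irr F x"
  have gF: "g \<in> carrier (F[X])" and glc: "lead_coeff g = \<one>" and gev: "eval g x = \<zero>"
    using IrrE[OF F x alg] unfolding g_def by auto
  have gc: "g \<in> carrier UP"
    using gF carrier_polynomial[OF Fs] univ_poly_carrier by metis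
  have gdiv: "g pdivides q [^]\<^bsub>UP\<^esub> p"
    unfolding qf g_def using Irr_minimal[OF F x alg fF evf] .
  have qe: "q = [\<one>, \<ominus> x]" unfolding q_def using x by (simp add: univ_poly_add var_def)
  have qirr: "pirreducible (carrier R) q"
    using degree_one_imp_pirreducible[OF carrier_is_subfield qc] qe by simp
  obtain k u where k: "k \<le> p" and u: "u \<in> Units UP" and gku: "g = q [^]\<^bsub>UP\<^esub> k \<otimes>\<^bsub>UP\<^esub> u"
    using pow_divisor[OF qc qirr gc gdiv] by blast
  obtain u0 where u0: "u = [u0]" "u0 \<in> carrier R" "u0 \<noteq> \<zero>"
    using u univ_poly_units[OF carrier_is_subfield] by auto
  have qkc: "q [^]\<^bsub>UP\<^esub> k \<in> carrier UP" using qc by simp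
  have qnz: "q \<noteq> []" using qe by simp
  have qk0: "q [^]\<^bsub>UP\<^esub> k \<noteq> []"
    using UP.pow_nz[OF qc, of k] qnz univ_poly_zero by metis
  have lcq: "lead_coeff (q [^]\<^bsub>UP\<^esub> n) = \<one>" for n :: nat
  proof (induction n)
    case 0 thus ?case by (simp add: univ_poly_one)
  next
    case (Suc n)
    have c1: "q [^]\<^bsub>UP\<^esub> n \<in> carrier UP" using qc by simp
    have n1: "q [^]\<^bsub>UP\<^esub> n \<noteq> []" using UP.pow_nz[OF qc, of n] qnz univ_poly_zero by metis
    have "q [^]\<^bsub>UP\<^esub> Suc n = poly_mult (q [^]\<^bsub>UP\<^esub> n) q" by (simp add: univ_poly_mult)
    also have "lead_coeff \<dots> = lead_coeff (q [^]\<^bsub>UP\<^esub> n) \<otimes> lead_coeff q"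
      using poly_mult_lead_coeff[OF carrier_is_subring _ _ n1 qnz] c1 qc univ_poly_carrier by metis
    finally show ?case using Suc qe by simp
  qed
  have degqk: "degree (q [^]\<^bsub>UP\<^esub> k) = k"
    using polynomial_pow_degree[OF qc, of k] qe by simp
  have uc: "u \<in> carrier UP" using u by auto
  have "lead_coeff g = lead_coeff (q [^]\<^bsub>UP\<^esub> k) \<otimes> lead_coeff u"
    unfolding gku univ_poly_mult
    using poly_mult_lead_coeff[OF carrier_is_subring _ _ qk0] qkc uc u0 univ_poly_carrier by (metis list.distinct(1))
  hence "u0 = \<one>" using glc lcq u0 by simp
  hence g1: "g = q [^]\<^bsub>UP\<^esub> k" using gku u0 UP.r_one[OF qkc] univ_poly_one[of R "carrier R"] by simp
  have degg: "degree g = k" using g1 degqk by simp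
  interpret ev0: ring_hom_ring UP R "\<lambda>g. eval g \<zero>" using eval_ring_hom[OF carrier_is_subring zero_closed] .
  have "eval g \<zero> = (eval q \<zero>) [^] k" using g1 ev0.hom_nat_pow[OF qc] by simp
  also have "eval q \<zero> = \<ominus> x" using qe x by simp
  finally have eg0: "eval g \<zero> = (\<ominus> x) [^] k" .
  have "eval g \<zero> \<in> F"
  proof -
    interpret Fr: ring "R \<lparr> carrier := F \<rparr>" using subring_is_ring[OF Fs] .
    have "set g \<subseteq> F" using gF polynomial_incl univ_poly_carrier by metis
    hence "Fr.eval g \<zero> \<in> F" using Fr.eval_in_carrier[of g "\<zero>"] subringE(2)[OF Fs] by simp
    thus ?thesis using eval_consistent[OF Fs] by simp
  qed
  hence mxk: "(\<ominus> x) [^] k \<in> F" using eg0 by simp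
  have "k \<noteq> 0"
  proof
    assume "k = 0"
    hence "g = [\<one>]" using g1 by (simp add: univ_poly_one)
    thus False using gev by simp
  qed
  moreover have "\<not> (0 < k \<and> k < p)"
  proof
    assume kk: "0 < k \<and> k < p"
    have "\<not> p dvd k" using kk by (auto dest: dvd_imp_le)
    hence cop: "coprime k p" using prime_imp_coprime[OF prime_p] by (simp add: coprime_commute)
    have "(\<ominus> x) [^] p \<in> F" using frob_neg[OF x] xp subringE(5)[OF Fs] by simp
    hence "\<ominus> x \<in> F" using coprime_pow_in[OF F _ mxk _ _ cop] kk x by simp
    hence "\<ominus> (\<ominus> x) \<in> F" using subringE(5)[OF Fs] by simp
    thus False using xn x by simp
  qed
  ultimately have "k = p" using k by linarith
  thus "degree (Irr F x) = p" using degg unfolding g_def by simp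
qed

end


fun free_list :: "('a, 'b) ring_scheme \<Rightarrow> 'a set \<Rightarrow> 'a list \<Rightarrow> bool" where
  "free_list R F [] = True"
| "free_list R F (z # zs) = (z \<notin> ring.finite_extension R F zs \<and> free_list R F zs)"

context charp
begin

lemma chain_dim:
  assumes F: "subfield F R"
  shows "set zs \<subseteq> carrier R \<Longrightarrow> (\<forall>z\<in>set zs. z [^] p \<in> F) \<Longrightarrow> free_list R F zs \<Longrightarrow>
         subfield (finite_extension F zs) R \<and> dimension (p ^ length zs) F (finite_extension F zs)"
proof (induction zs)
  case Nil
  thus ?case using F dimension_one[OF F] by simp
next
  case (Cons z zs)
  define E where "E = finite_extension F zs"
  have E: "subfield E R" and dE: "dimension (p ^ length zs) F E"
    using Cons unfolding E_def by auto
  have z: "z \<in> carrier R" using Cons by simp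
  have zn: "z \<notin> E" using Cons unfolding E_def by simp
  have FE: "F \<subseteq> E" unfolding E_def
    using finite_extension_incl[OF subringE(1)[OF subfieldE(1)[OF F]]] Cons by simp
  have zp: "z [^] p \<in> E" using Cons FE by auto
  have alg: "(algebraic over E) z" and deg: "degree (Irr E z) = p"
    using Irr_deg[OF E z zp zn] by auto
  have d1: "dimension p E (simple_extension E z)"
    using dimension_simple_extension[OF E z alg] deg by simp
  have "dimension (p ^ length zs * p) F (simple_extension E z)"
    using telescopic_base[OF F E dE d1] .
  moreover have "subfield (simple_extension E z) R"
    using simple_extension_is_subfield[OF E z] alg by simp
  ultimately show ?case unfolding E_def by (simp add: mult.commute)
qed

lemma free_mono:
  assumes "A \<subseteq> C" shows "free_list R C zs \<Longrightarrow> free_list R A zs"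
proof (induction zs)
  case Nil thus ?case by simp
next
  case (Cons z zs)
  thus ?case using mono_finite_extension[OF assms, of zs] by auto
qed

lemma exists_free_basis:
  assumes C: "subfield C R" and B: "subfield B R" and CB: "C \<subseteq> B" and dim: "dimension m C B"
    and pw: "\<forall>b\<in>B. b [^] p \<in> C"
  shows "\<exists>zs. set zs \<subseteq> B \<and> free_list R C zs \<and> finite_extension C zs = B"
proof -
  have BR: "B \<subseteq> carrier R" using subringE(1)[OF subfieldE(1)[OF B]] .
  let ?G = "\<exists>zs. set zs \<subseteq> B \<and> free_list R C zs \<and> finite_extension C zs = B"
  have main: "?G \<or> (\<exists>zs. set zs \<subseteq> B \<and> free_list R C zs \<and> length zs = k)" for k
  proof (induction k)
    case 0 thus ?case by (intro disjI2 exI[of _ "[]"]) simp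
  next
    case (Suc k)
    show ?case
    proof (cases ?G)
      case True thus ?thesis by simp
    next
      case False
      then obtain zs where zs: "set zs \<subseteq> B" "free_list R C zs" "length zs = k" using Suc by blast
      have "finite_extension C zs \<subseteq> B"
        using finite_extension_subring_incl[OF subfieldE(1)[OF B] CB zs(1)] .
      moreover have "finite_extension C zs \<noteq> B" using False zs by blast
      ultimately obtain z where z: "z \<in> B" "z \<notin> finite_extension C zs" by blast
      thus ?thesis using zs by (intro disjI2 exI[of _ "z # zs"]) simp
    qed
  qed
  show ?G
  proof (rule ccontr)
    assume "\<not> ?G"
    then obtain zs where zs: "set zs \<subseteq> B" "free_list R C zs" "length zs = Suc m" using main by blast
    have "\<forall>z\<in>set zs. z [^] p \<in> C" using zs pw by auto
    hence dz: "dimension (p ^ Suc m) C (finite_extension C zs)"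
      using chain_dim[OF C _ _ zs(2)] zs BR by auto
    have sub: "finite_extension C zs \<subseteq> B"
      using finite_extension_subring_incl[OF subfieldE(1)[OF B] CB zs(1)] .
    obtain Vs where Vs: "set Vs \<subseteq> carrier R" "independent C Vs" "length Vs = p ^ Suc m"
      "Span C Vs = finite_extension C zs"
      using exists_base[OF C dz] by blast
    have "set Vs \<subseteq> B" using Span_base_incl[OF C Vs(1)] Vs(4) sub by auto
    hence "p ^ Suc m \<le> m" using independent_length_le_dimension[OF C dim Vs(2)] Vs(3) by simp
    moreover have "Suc m < 2 ^ Suc m" by (rule less_exp)
    moreover have "2 ^ Suc m \<le> p ^ Suc m" using p_ge2 by (intro power_mono) auto
    ultimately show False by linarith
  qed
qed

end


context charp
begin

lemma pow_alg:
  assumes F: "subfield F R" and x: "x \<in> carrier R" and xp: "x [^] p \<in> F"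
  shows "(algebraic over F) x"
proof (cases "x \<in> F")
  case True thus ?thesis using algebraic_self[OF subfieldE(1)[OF F]] by simp
next
  case False thus ?thesis using Irr_deg(1)[OF F x xp] by simp
qed

lemma subfield_subalgebra:
  assumes "subfield V R" "K \<subseteq> V" shows "subalgebra K V R"
  using subfieldE(1)[OF assms(1)] assms(2)
  unfolding subalgebra_def subalgebra_axioms_def subring_def
  by (auto intro: subringE(6)[OF subfieldE(1)[OF assms(1)]])

lemma dim_mono:
  assumes A: "subfield A R" and C: "subfield C R" and AC: "A \<subseteq> C"
    and fd: "finite_dimension A E" and sub: "subalgebra C E R"
  shows "finite_dimension C E"
proof -
  obtain n where "dimension n A E" using fd by auto
  then obtain Us where Us: "set Us \<subseteq> carrier R" "Span A Us = E"
    using exists_base[OF A] by blast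
  have "set Us \<subseteq> E" using Span_base_incl[OF A Us(1)] Us(2) by simp
  hence "Span C Us \<subseteq> E" using subalgebra_Span_incl[OF C sub] by simp
  moreover have "Span A Us \<subseteq> Span C Us"
    unfolding Span_eq_combine_set[OF A Us(1)] Span_eq_combine_set[OF C Us(1)] using AC by blast
  ultimately have "E = Span C Us" using Us(2) by simp
  thus ?thesis using Span_finite_dimension[OF C Us(1)] by simp
qed

end


theorem mainTheorem12:
  fixes R :: "('a, 'b) ring_scheme" (structure)
    and p :: nat and W1 :: "'a set"
  assumes "field R"
    and "ring_char R = p" and "p > 0"
    and "fin_gen_ext R (perfect_core R p)"
    and "subfield W1 R"
    and "frob_image R p \<subseteq> W1" and "W1 \<noteq> carrier R"
  shows "\<exists>W2. subfield W2 R \<and> W2 \<subseteq> W1 \<and>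
           frob_image R (p ^ 2) \<subseteq> W2 \<and>
           compositum R W2 (frob_image R p) = W1 \<and>
           (\<exists>n. ring.dimension R n W2 W1 \<and> ring.dimension R n W1 (carrier R))"
proof -
  interpret field R by (rule assms(1))
  interpret charp R p
    using char_facts[OF assms(1-3)] by unfold_locales auto
  define \<phi> where "\<phi> = (\<lambda>x. x [^] p)"
  define C where "C = frob_image R p"
  define A where "A = \<phi> ` W1"
  have W1: "subfield W1 R" by (rule assms(5))
  have W1R: "W1 \<subseteq> carrier R" using subringE(1)[OF subfieldE(1)[OF W1]] .
  have C: "subfield C R" unfolding C_def by (rule frob_image_subfield)
  have Ceq: "C = \<phi> ` carrier R" unfolding C_def frob_image_def \<phi>_def ..
  have A: "subfield A R" unfolding A_def \<phi>_def by (rule frob_img_subfield(1)[OF W1])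
  have CW1: "C \<subseteq> W1" unfolding C_def by (rule assms(6))
  have AC: "A \<subseteq> C" unfolding A_def Ceq using W1R by auto
  have AW1: "A \<subseteq> W1" using AC CW1 by simp
  have AR: "A \<subseteq> carrier R" using AW1 W1R by simp
  have CR: "C \<subseteq> carrier R" using CW1 W1R by simp
  have finK: "finite_dimension C (carrier R)"
  proof -
    obtain S where S: "finite S" "S \<subseteq> carrier R" "generate_field R (perfect_core R p \<union> S) = carrier R"
      using assms(4) unfolding fin_gen_ext_def by blast
    obtain ss where ss: "set ss = S" using finite_list[OF S(1)] by blast
    have ssR: "set ss \<subseteq> carrier R" using ss S by simp
    have alg: "\<And>s. s \<in> set ss \<Longrightarrow> (algebraic over C) s"
      using pow_alg[OF C] ssR unfolding Ceq \<phi>_def by auto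
    define E where "E = finite_extension C ss"
    have E: "subfield E R" unfolding E_def using finite_extension_is_subfield[OF C ssR alg] .
    have fd: "finite_dimension C E" unfolding E_def using finite_extension_finite_dimension(1)[OF C ssR alg] .
    have "perfect_core R p \<subseteq> C" unfolding perfect_core_def C_def
      using INT_lower[of 1 UNIV "\<lambda>n. frob_image R (p ^ n)"] by simp
    hence "perfect_core R p \<subseteq> E" using finite_extension_incl[OF CR ssR] unfolding E_def by auto
    moreover have "S \<subseteq> E" using finite_extension_mem[OF subfieldE(1)[OF C] ssR] ss unfolding E_def by simp
    ultimately have U: "perfect_core R p \<union> S \<subseteq> E" by simp
    have ER: "E \<subseteq> carrier R" using subringE(1)[OF subfieldE(1)[OF E]] .
    have "generate_field R (perfect_core R p \<union> S) \<subseteq> E"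
      using generate_field_min_subfield1[OF subset_trans[OF U ER] E U] .
    hence "E = carrier R" using S(3) subringE(1)[OF subfieldE(1)[OF E]] by simp
    thus ?thesis using fd by simp
  qed
  have finKW: "finite_dimension W1 (carrier R)"
    using dim_mono[OF C W1 CW1 finK carrier_is_subalgebra[OF W1R]] .
  then obtain n where dn: "dimension n W1 (carrier R)" by auto
  have injphi: "inj_on \<phi> (carrier R)" unfolding \<phi>_def using frob_img_subfield(2)[OF carrier_is_subfield] .
  have dAC: "dimension n A C"
    using ring_hom_ring.inj_hom_dimension[OF frob_hom_ring W1 one_not_zero injphi[unfolded \<phi>_def] dn]
    unfolding A_def Ceq \<phi>_def .
  have finW1: "finite_dimension C W1"
    using subalbegra_incl_imp_finite_dimension[OF C finK subfield_subalgebra[OF W1 CW1] W1R] .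
  then obtain m where dm: "dimension m C W1" by auto
  have pwC: "\<forall>b\<in>W1. b [^] p \<in> C" using W1R unfolding Ceq \<phi>_def by auto
  obtain zs where zs: "set zs \<subseteq> W1" "free_list R C zs" "finite_extension C zs = W1"
    using exists_free_basis[OF C W1 CW1 dm pwC] by blast
  have zsR: "set zs \<subseteq> carrier R" using zs(1) W1R by auto
  have pwA: "\<forall>z\<in>set zs. z [^] p \<in> A" using zs(1) unfolding A_def \<phi>_def by auto
  have pwC': "\<forall>z\<in>set zs. z [^] p \<in> C" using pwA AC by auto
  have dCW: "dimension (p ^ length zs) C W1"
    using chain_dim[OF C zsR pwC' zs(2)] zs(3) by simp
  define N where "N = finite_extension A zs"
  have N: "subfield N R" and dAN: "dimension (p ^ length zs) A N"
    using chain_dim[OF A zsR pwA free_mono[OF AC zs(2)]] unfolding N_def by auto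
  have dAW: "dimension (n * p ^ length zs) A W1" using telescopic_base[OF A C dAC dCW] .
  have NW1: "N \<subseteq> W1" unfolding N_def
    using finite_extension_subring_incl[OF subfieldE(1)[OF W1] AW1 zs(1)] .
  have AN: "A \<subseteq> N" unfolding N_def using finite_extension_incl[OF AR zsR] .
  have "finite_dimension N W1"
    using dim_mono[OF A N AN finite_dimensionI[OF dAW] subfield_subalgebra[OF W1 NW1]] .
  then obtain m' where dm': "dimension m' N W1" by auto
  have "dimension (p ^ length zs * m') A W1" using telescopic_base[OF A N dAN dm'] .
  hence "n * p ^ length zs = p ^ length zs * m'" using dimension_is_inj[OF A dAW] by simp
  moreover have "p ^ length zs > 0" using p_ge2 by simp
  ultimately have "m' = n" using p_ge2 by (auto simp: mult.commute)
  hence dNW: "dimension n N W1" using dm' by simp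
  have frob2: "frob_image R (p ^ 2) \<subseteq> N"
  proof
    fix y assume "y \<in> frob_image R (p ^ 2)"
    then obtain x where x: "x \<in> carrier R" "y = x [^] (p ^ 2)" unfolding frob_image_def by auto
    have "y = (x [^] p) [^] p" using x by (simp add: nat_pow_pow power2_eq_square)
    moreover have "x [^] p \<in> W1" using CW1 x unfolding Ceq \<phi>_def by auto
    ultimately have "y \<in> A" unfolding A_def \<phi>_def by auto
    thus "y \<in> N" using AN by auto
  qed
  have comp: "compositum R N (frob_image R p) = W1"
  proof -
    have NR: "N \<union> C \<subseteq> carrier R" using NW1 CW1 W1R by auto
    have "generate_field R (N \<union> C) \<subseteq> W1"
      using generate_field_min_subfield1[OF NR W1] NW1 CW1 by auto
    moreover have "W1 \<subseteq> generate_field R (N \<union> C)"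
    proof -
      define G where "G = generate_field R (N \<union> C)"
      have G: "subfield G R" unfolding G_def using generate_field_is_subfield[OF NR] .
      have NCG: "N \<union> C \<subseteq> G" unfolding G_def using generate_fieldE(2)[OF NR refl] .
      have "set zs \<subseteq> N" unfolding N_def using finite_extension_mem[OF subfieldE(1)[OF A] zsR] .
      hence "finite_extension C zs \<subseteq> G"
        using finite_extension_subring_incl[OF subfieldE(1)[OF G], of C zs] NCG by auto
      thus ?thesis using zs(3) unfolding G_def by simp
    qed
    ultimately show ?thesis unfolding compositum_def C_def by simp
  qed
  show ?thesis
    using N NW1 frob2 comp dNW dn by blast
qed


end
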